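(* In $TTR$, if $A$ is a $\perp$-type and $A\subseteq B$, then $B$ is a $\perp$-type.
   Context: $TTR$ types: over a second-order language with first-order variables, function symbols, $n$-ary predicate variables and symbols, and a fixed system $\mathbf E$ of equations; atomic $\perp$ and $X(t_1,\dots,t_n)$; constructors $\to$, $\forall x$, $\forall X$, and $\mu Cx_1\dots x_nA\langle t_1,\dots,t_n\rangle$ for $C$ an $n$-ary predicate symbol occurring and positive in $A$. Subtyping $\subseteq$ is generated by: reflexivity; $A\subseteq A',B\subseteq B'\Rightarrow A'\to B\subseteq A\to B'$; $A[G/v]\subseteq B\Rightarrow\forall vA\subseteq B$ ($G$ a term or formula as appropriate); $A\subseteq B\Rightarrow A\subseteq\forall vB$ ($v$ not free in $A$); $A\subseteq B[v/y]\Rightarrow A\subseteq B[w/y]$ for $v=w$ an instance of an equation of $\mathbf E$; transitivity; $D[\mu C\bar xD\langle\bar z\rangle/C(\bar z)][\bar t/\bar x]\subseteq\mu C\bar xD\langle\bar t\rangle$ and its converse; $D[E/C(\bar x)]\subseteq E\Rightarrow\mu C\bar xD\langle\bar t\rangle\subseteq E[\bar t/\bar x]$. $\perp$-types: $\perp$ is a $\perp$-type; if $A$ is a $\perp$-type then $B\to A$ (any type $B$), $\forall vA$ (any variable $v$), and $\mu Cx_1\dots x_nA\langle t_1,\dots,t_n\rangle$ ($C$ an $n$-ary predicate symbol occurring and positive in $A$) are $\perp$-types. *)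

theory Defs
  imports Main
begin

text \<open>First-order terms over function symbols of type 'f.
  First-order variables are de Bruijn indices.\<close>
datatype 'f trm = TV nat | Fn 'f "'f trm list"

text \<open>Predicate variables (bound by AllP) and predicate symbols (bound by Mu)
  live in two separate namespaces; in each namespace, a predicate of arity m is
  identified by the pair (m, index), where the de Bruijn index only counts binders of
  the same arity. The arity of an occurrence  PV i ts / PS i ts  is  length ts.
  AllT binds one first-order variable, AllP n binds one n-ary predicate variable.
  Mu A ts  is  mu C x_1..x_n A <t_1..t_n>  with n = length ts: it binds the n-ary
  predicate symbol C (index 0 of arity n) and the first-order variables
  x_1..x_n (indices 0..n-1 in A, x_(j+1) corresponds to t_(j+1)).\<close>
datatype 'f ty =
    Bot
  | PV nat "'f trm list"
  | PS nat "'f trm list"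
  | Arr "'f ty" "'f ty"
  | AllT "'f ty"
  | AllP nat "'f ty"
  | Mu "'f ty" "'f trm list"

fun substTm :: "(nat \<Rightarrow> 'f trm) \<Rightarrow> 'f trm \<Rightarrow> 'f trm" where
  "substTm \<sigma> (TV i) = \<sigma> i"
| "substTm \<sigma> (Fn f ts) = Fn f (map (substTm \<sigma>) ts)"

definition upT :: "(nat \<Rightarrow> 'f trm) \<Rightarrow> nat \<Rightarrow> 'f trm" where
  "upT \<sigma> j = (case j of 0 \<Rightarrow> TV 0 | Suc k \<Rightarrow> substTm (\<lambda>l. TV (Suc l)) (\<sigma> k))"

fun substF :: "(nat \<Rightarrow> 'f trm) \<Rightarrow> 'f ty \<Rightarrow> 'f ty" where
  "substF \<sigma> Bot = Bot"
| "substF \<sigma> (PV i ts) = PV i (map (substTm \<sigma>) ts)"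
| "substF \<sigma> (PS i ts) = PS i (map (substTm \<sigma>) ts)"
| "substF \<sigma> (Arr A B) = Arr (substF \<sigma> A) (substF \<sigma> B)"
| "substF \<sigma> (AllT A) = AllT (substF (upT \<sigma>) A)"
| "substF \<sigma> (AllP n A) = AllP n (substF \<sigma> A)"
| "substF \<sigma> (Mu A ts) = Mu (substF ((upT ^^ length ts) \<sigma>) A) (map (substTm \<sigma>) ts)"

definition shF :: "nat \<Rightarrow> nat \<Rightarrow> 'f ty \<Rightarrow> 'f ty" where
  "shF n k = substF (\<lambda>j. if j < n then TV j else TV (j + k))"

definition inst0 :: "'f trm \<Rightarrow> nat \<Rightarrow> 'f trm" where
  "inst0 t j = (case j of 0 \<Rightarrow> t | Suc k \<Rightarrow> TV k)"

definition instL :: "'f trm list \<Rightarrow> nat \<Rightarrow> 'f trm" where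
  "instL ts j = (if j < length ts then ts ! j else TV (j - length ts))"

definition upR :: "(nat \<Rightarrow> nat) \<Rightarrow> nat \<Rightarrow> nat" where
  "upR f j = (case j of 0 \<Rightarrow> 0 | Suc k \<Rightarrow> Suc (f k))"

fun renP :: "(nat \<Rightarrow> nat \<Rightarrow> nat) \<Rightarrow> (nat \<Rightarrow> nat \<Rightarrow> nat) \<Rightarrow> 'f ty \<Rightarrow> 'f ty" where
  "renP fp fs Bot = Bot"
| "renP fp fs (PV i ts) = PV (fp (length ts) i) ts"
| "renP fp fs (PS i ts) = PS (fs (length ts) i) ts"
| "renP fp fs (Arr A B) = Arr (renP fp fs A) (renP fp fs B)"
| "renP fp fs (AllT A) = AllT (renP fp fs A)"
| "renP fp fs (AllP n A) = AllP n (renP (fp(n := upR (fp n))) fs A)"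
| "renP fp fs (Mu A ts) = Mu (renP fp (fs(length ts := upR (fs (length ts)))) A) ts"

definition shP :: "nat \<Rightarrow> 'f ty \<Rightarrow> 'f ty" where
  "shP m = renP (\<lambda>a. if a = m then Suc else id) (\<lambda>a. id)"

definition shS :: "nat \<Rightarrow> 'f ty \<Rightarrow> 'f ty" where
  "shS m = renP (\<lambda>a. id) (\<lambda>a. if a = m then Suc else id)"

text \<open>A formula abstraction of arity m is a type G whose first-order indices
  0..m-1 are the parameters x_1..x_m and whose index j \<open>\<ge> m\<close> denotes the
  free variable j - m of the surrounding context.\<close>
definition inst :: "nat \<Rightarrow> 'f ty \<Rightarrow> 'f trm list \<Rightarrow> 'f ty" where
  "inst m G ts = substF (\<lambda>j. if j < m then ts ! j else TV (j - m)) G"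

definition idPV :: "nat \<Rightarrow> nat \<Rightarrow> 'f ty" where
  "idPV m i = PV i (map TV [0..<m])"

definition idPS :: "nat \<Rightarrow> nat \<Rightarrow> 'f ty" where
  "idPS m i = PS i (map TV [0..<m])"

definition liftFOa :: "nat \<Rightarrow> (nat \<Rightarrow> nat \<Rightarrow> 'f ty) \<Rightarrow> nat \<Rightarrow> nat \<Rightarrow> 'f ty" where
  "liftFOa k \<sigma> m i = substF (\<lambda>j. if j < m then TV j else TV (j + k)) (\<sigma> m i)"

definition upPV :: "nat \<Rightarrow> (nat \<Rightarrow> nat \<Rightarrow> 'f ty) \<Rightarrow> nat \<Rightarrow> nat \<Rightarrow> 'f ty" where
  "upPV n \<sigma> m i = (if m = n then (case i of 0 \<Rightarrow> idPV m 0 | Suc j \<Rightarrow> shP n (\<sigma> m j))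
                    else shP n (\<sigma> m i))"

definition upPS :: "nat \<Rightarrow> (nat \<Rightarrow> nat \<Rightarrow> 'f ty) \<Rightarrow> nat \<Rightarrow> nat \<Rightarrow> 'f ty" where
  "upPS n \<sigma> m i = (if m = n then (case i of 0 \<Rightarrow> idPS m 0 | Suc j \<Rightarrow> shS n (\<sigma> m j))
                    else shS n (\<sigma> m i))"

fun substP :: "(nat \<Rightarrow> nat \<Rightarrow> 'f ty) \<Rightarrow> (nat \<Rightarrow> nat \<Rightarrow> 'f ty) \<Rightarrow> 'f ty \<Rightarrow> 'f ty" where
  "substP \<sigma>P \<sigma>S Bot = Bot"
| "substP \<sigma>P \<sigma>S (PV i ts) = inst (length ts) (\<sigma>P (length ts) i) ts"
| "substP \<sigma>P \<sigma>S (PS i ts) = inst (length ts) (\<sigma>S (length ts) i) ts"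
| "substP \<sigma>P \<sigma>S (Arr A B) = Arr (substP \<sigma>P \<sigma>S A) (substP \<sigma>P \<sigma>S B)"
| "substP \<sigma>P \<sigma>S (AllT A) = AllT (substP (liftFOa 1 \<sigma>P) (liftFOa 1 \<sigma>S) A)"
| "substP \<sigma>P \<sigma>S (AllP n A) = AllP n (substP (upPV n \<sigma>P) (\<lambda>m i. shP n (\<sigma>S m i)) A)"
| "substP \<sigma>P \<sigma>S (Mu A ts) =
     Mu (substP (\<lambda>m i. shS (length ts) (liftFOa (length ts) \<sigma>P m i))
                (upPS (length ts) (liftFOa (length ts) \<sigma>S)) A) ts"

definition substX :: "nat \<Rightarrow> 'f ty \<Rightarrow> 'f ty \<Rightarrow> 'f ty" where
  "substX n G = substP (\<lambda>m i. if m = n then (case i of 0 \<Rightarrow> G | Suc j \<Rightarrow> idPV m j) else idPV m i) idPS"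

definition substC :: "nat \<Rightarrow> 'f ty \<Rightarrow> 'f ty \<Rightarrow> 'f ty" where
  "substC n G = substP idPV (\<lambda>m i. if m = n then (case i of 0 \<Rightarrow> G | Suc j \<Rightarrow> idPS m j) else idPS m i)"

text \<open>D[mu C x D<z>/C(z)][t/x] for  Mu D ts.\<close>
definition unfoldMu :: "'f ty \<Rightarrow> 'f trm list \<Rightarrow> 'f ty" where
  "unfoldMu D ts = substC (length ts)
      (Mu (shF (length ts) (length ts) D) (map TV [0..<length ts]))
      (substF (instL ts) D)"

fun occS :: "nat \<Rightarrow> nat \<Rightarrow> 'f ty \<Rightarrow> bool" where
  "occS m i (PS j ts) = (j = i \<and> length ts = m)"
| "occS m i (Arr A B) = (occS m i A \<or> occS m i B)"
| "occS m i (AllT A) = occS m i A"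
| "occS m i (AllP n A) = occS m i A"
| "occS m i (Mu A ts) = occS m (if length ts = m then Suc i else i) A"
| "occS m i _ = False"

text \<open>Every occurrence of the predicate symbol (m,i) in A has polarity b
  (True = positive: to the left of an even number of arrows).\<close>
fun allpol :: "bool \<Rightarrow> nat \<Rightarrow> nat \<Rightarrow> 'f ty \<Rightarrow> bool" where
  "allpol b m i (PS j ts) = (b \<or> j \<noteq> i \<or> length ts \<noteq> m)"
| "allpol b m i (Arr A B) = (allpol (\<not> b) m i A \<and> allpol b m i B)"
| "allpol b m i (AllT A) = allpol b m i A"
| "allpol b m i (AllP n A) = allpol b m i A"
| "allpol b m i (Mu A ts) = allpol b m (if length ts = m then Suc i else i) A"
| "allpol b m i _ = True"

definition positiveS :: "nat \<Rightarrow> nat \<Rightarrow> 'f ty \<Rightarrow> bool" where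
  "positiveS m i A = allpol True m i A"

fun is_type :: "'f ty \<Rightarrow> bool" where
  "is_type Bot = True"
| "is_type (PV i ts) = True"
| "is_type (PS i ts) = True"
| "is_type (Arr A B) = (is_type A \<and> is_type B)"
| "is_type (AllT A) = is_type A"
| "is_type (AllP n A) = is_type A"
| "is_type (Mu A ts) = (is_type A \<and> occS (length ts) 0 A \<and> positiveS (length ts) 0 A)"

definition eq_inst :: "('f trm \<times> 'f trm) set \<Rightarrow> 'f trm \<Rightarrow> 'f trm \<Rightarrow> bool" where
  "eq_inst E v w = (\<exists>l r \<sigma>. (l, r) \<in> E \<and> v = substTm \<sigma> l \<and> w = substTm \<sigma> r)"

inductive subty :: "('f trm \<times> 'f trm) set \<Rightarrow> 'f ty \<Rightarrow> 'f ty \<Rightarrow> bool" for E where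
  refl: "is_type A \<Longrightarrow> subty E A A"
| arr: "subty E A A' \<Longrightarrow> subty E B B' \<Longrightarrow> subty E (Arr A' B) (Arr A B')"
| allT_L: "is_type (AllT A) \<Longrightarrow> subty E (substF (inst0 t) A) B \<Longrightarrow> subty E (AllT A) B"
| allP_L: "is_type (AllP n A) \<Longrightarrow> is_type G \<Longrightarrow> subty E (substX n G A) B \<Longrightarrow> subty E (AllP n A) B"
| allT_R: "subty E (shF 0 1 A) B \<Longrightarrow> subty E A (AllT B)"
| allP_R: "subty E (shP n A) B \<Longrightarrow> subty E A (AllP n B)"
| eqn: "eq_inst E v w \<Longrightarrow> is_type B \<Longrightarrow> subty E A (substF (TV(y := v)) B)
          \<Longrightarrow> subty E A (substF (TV(y := w)) B)"
| trans: "subty E A B \<Longrightarrow> subty E B C \<Longrightarrow> subty E A C"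
| mu_fold: "is_type (Mu D ts) \<Longrightarrow> subty E (unfoldMu D ts) (Mu D ts)"
| mu_unfold: "is_type (Mu D ts) \<Longrightarrow> subty E (Mu D ts) (unfoldMu D ts)"
| mu_ind: "is_type (Mu D ts) \<Longrightarrow> is_type F \<Longrightarrow>
     subty E (substC (length ts) (shF (length ts) (length ts) F) D) F \<Longrightarrow>
     subty E (Mu D ts) (substF (instL ts) F)"

inductive botty :: "'f ty \<Rightarrow> bool" where
  bot: "botty Bot"
| arr: "is_type B \<Longrightarrow> botty A \<Longrightarrow> botty (Arr B A)"
| allT: "botty A \<Longrightarrow> botty (AllT A)"
| allP: "botty A \<Longrightarrow> botty (AllP n A)"
| mu: "botty A \<Longrightarrow> occS (length ts) 0 A \<Longrightarrow> positiveS (length ts) 0 A \<Longrightarrow> botty (Mu A ts)"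

end

theory Submission
  imports Defs
begin

fun bt :: "'f ty \<Rightarrow> bool" where
  "bt Bot = True"
| "bt (Arr A B) = bt B"
| "bt (AllT A) = bt A"
| "bt (AllP n A) = bt A"
| "bt (Mu A ts) = bt A"
| "bt _ = False"

lemma substF_props:
  "occS m i (substF \<sigma> X) = occS m i X"
  "allpol b m i (substF \<sigma> X) = allpol b m i X"
  "is_type (substF \<sigma> X) = is_type X"
  "bt (substF \<sigma> X) = bt X"
  by (induction X arbitrary: \<sigma> m i b) (auto simp: positiveS_def)

lemma inj_upR: "inj f \<Longrightarrow> inj (upR f)"
  unfolding inj_def upR_def by (auto split: nat.splits)

lemma renP_occ:
  "(\<forall>a. inj (fs a)) \<Longrightarrow> occS m (fs m i) (renP fp fs X) = occS m i X"
  "(\<forall>a. inj (fs a)) \<Longrightarrow> allpol b m (fs m i) (renP fp fs X) = allpol b m i X"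
proof (induction X arbitrary: fp fs m i b)
  case (PS j ts)
  { case 1 thus ?case by (auto simp: inj_eq) }
  { case 2 thus ?case by (auto simp: inj_eq) }
next
  case (Mu A ts)
  { case 1
    let ?fs = "fs(length ts := upR (fs (length ts)))"
    have inj: "\<forall>a. inj (?fs a)" using 1 inj_upR by auto
    show ?case
    proof (cases "length ts = m")
      case True
      have "Suc (fs m i) = ?fs m (Suc i)" using True by (simp add: upR_def)
      thus ?thesis using Mu.IH(1)[where fs="?fs" and m=m and i="Suc i" and fp=fp] inj True by (simp add: fun_upd_def)
    next
      case False
      thus ?thesis using Mu.IH(1)[where fs="?fs" and m=m and i=i and fp=fp] inj by (simp add: fun_upd_def)
    qed }
  { case 2
    let ?fs = "fs(length ts := upR (fs (length ts)))"
    have inj: "\<forall>a. inj (?fs a)" using 2 inj_upR by auto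
    show ?case
    proof (cases "length ts = m")
      case True
      have "Suc (fs m i) = ?fs m (Suc i)" using True by (simp add: upR_def)
      thus ?thesis using Mu.IH(2)[where fs="?fs" and m=m and i="Suc i" and fp=fp and b=b] inj True by (simp add: fun_upd_def)
    next
      case False
      thus ?thesis using Mu.IH(2)[where fs="?fs" and m=m and i=i and fp=fp and b=b] inj by (simp add: fun_upd_def)
    qed }
qed auto

lemma renP_nocc:
  "(\<forall>i. fs m i \<noteq> j) \<Longrightarrow> \<not> occS m j (renP fp fs X)"
  "(\<forall>i. fs m i \<noteq> j) \<Longrightarrow> allpol b m j (renP fp fs X)"
proof (induction X arbitrary: fp fs m j b)
  case (Mu A ts)
  { case 1
    let ?fs = "fs(length ts := upR (fs (length ts)))"
    have "\<forall>i. ?fs m i \<noteq> (if length ts = m then Suc j else j)"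
      using 1 by (auto simp: upR_def split: nat.splits)
    thus ?case using Mu.IH(1) by simp }
  { case 2
    let ?fs = "fs(length ts := upR (fs (length ts)))"
    have "\<forall>i. ?fs m i \<noteq> (if length ts = m then Suc j else j)"
      using 2 by (auto simp: upR_def split: nat.splits)
    thus ?case using Mu.IH(2) by simp }
qed auto

lemma renP_props:
  "(\<forall>a. inj (fs a)) \<Longrightarrow> is_type (renP fp fs X) = is_type X"
  "bt (renP fp fs X) = bt X"
proof (induction X arbitrary: fp fs)
  case (Mu A ts)
  { case 1
    let ?fs = "fs(length ts := upR (fs (length ts)))"
    have inj: "\<forall>a. inj (?fs a)" using 1 inj_upR by auto
    have z: "?fs (length ts) 0 = 0" by (simp add: upR_def)
    show ?case using Mu.IH(1)[where fs="?fs" and fp=fp] inj renP_occ(1)[where fs="?fs" and m="length ts" and i=0 and fp=fp and X=A] z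
      renP_occ(2)[where fs="?fs" and b=True and m="length ts" and i=0 and fp=fp and X=A]
      by (simp add: positiveS_def fun_upd_def) }
  { case 2 thus ?case using Mu.IH(2) by simp }
qed auto

lemma shP_props:
  "occS m i (shP n X) = occS m i X" "allpol b m i (shP n X) = allpol b m i X"
  "is_type (shP n X) = is_type X" "bt (shP n X) = bt X"
  using renP_occ(1)[where fs="\<lambda>a. id" and m=m and i=i and fp="\<lambda>a. if a = n then Suc else id" and X=X]
    renP_occ(2)[where fs="\<lambda>a. id" and b=b and m=m and i=i and fp="\<lambda>a. if a = n then Suc else id" and X=X]
    renP_props[where fs="\<lambda>a. id" and fp="\<lambda>a. if a = n then Suc else id" and X=X]
  by (auto simp: shP_def)

lemma shS_props:
  "occS k (if k = n then Suc j else j) (shS n X) = occS k j X"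
  "allpol b k (if k = n then Suc j else j) (shS n X) = allpol b k j X"
  "is_type (shS n X) = is_type X" "bt (shS n X) = bt X"
  "\<not> occS n 0 (shS n X)" "allpol b n 0 (shS n X)"
proof -
  have inj: "\<forall>a. inj ((\<lambda>a. if a = n then Suc else id) a)" by auto
  show "occS k (if k = n then Suc j else j) (shS n X) = occS k j X"
    using renP_occ(1)[OF inj, where m=k and i=j and fp="\<lambda>a. id" and X=X] by (cases "k = n") (simp_all add: shS_def)
  show "allpol b k (if k = n then Suc j else j) (shS n X) = allpol b k j X"
    using renP_occ(2)[OF inj, where b=b and m=k and i=j and fp="\<lambda>a. id" and X=X] by (cases "k = n") (simp_all add: shS_def)
  show "is_type (shS n X) = is_type X" using renP_props(1)[OF inj] by (simp add: shS_def)
  show "bt (shS n X) = bt X" using renP_props(2) by (simp add: shS_def)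
  show "\<not> occS n 0 (shS n X)" using renP_nocc(1)[of "\<lambda>a. if a = n then Suc else id" n 0]
    by (simp add: shS_def)
  show "allpol b n 0 (shS n X)" using renP_nocc(2)[of "\<lambda>a. if a = n then Suc else id" n 0]
    by (simp add: shS_def)
qed

lemma liftFOa_props:
  "occS k j (liftFOa l \<sigma> m i) = occS k j (\<sigma> m i)"
  "allpol b k j (liftFOa l \<sigma> m i) = allpol b k j (\<sigma> m i)"
  "is_type (liftFOa l \<sigma> m i) = is_type (\<sigma> m i)"
  "bt (liftFOa l \<sigma> m i) = bt (\<sigma> m i)"
  by (simp_all add: liftFOa_def substF_props)

lemma inst_props:
  "occS k j (inst l G ts) = occS k j G"
  "allpol b k j (inst l G ts) = allpol b k j G"
  "is_type (inst l G ts) = is_type G"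
  "bt (inst l G ts) = bt G"
  by (simp_all add: inst_def substF_props)

lemma nocc_allpol: "\<not> occS k j Y \<Longrightarrow> allpol b k j Y"
  by (induction Y arbitrary: b j) auto

lemma upPS_sh: "upPS n \<tau> m (if m = n then Suc i else i) = shS n (\<tau> m i)"
  by (simp add: upPS_def)

lemma bt_upPV: "bt (upPV n \<sigma> m i) \<Longrightarrow> \<exists>m i. bt (\<sigma> m i)"
  by (auto simp: upPV_def idPV_def shP_props split: if_splits nat.splits)

lemma bt_upPS: "bt (upPS n (liftFOa n \<sigma>) m i) \<Longrightarrow> \<exists>m i. bt (\<sigma> m i)"
  by (auto simp: upPS_def idPS_def shS_props liftFOa_props split: if_splits nat.splits)

lemma substP_bt1: "bt X \<Longrightarrow> bt (substP \<sigma>P \<sigma>S X)"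
  by (induction X arbitrary: \<sigma>P \<sigma>S) auto

lemma substP_bt2:
  "bt (substP \<sigma>P \<sigma>S X) \<Longrightarrow> bt X \<or> (\<exists>m i. bt (\<sigma>P m i)) \<or> (\<exists>m i. bt (\<sigma>S m i))"
proof (induction X arbitrary: \<sigma>P \<sigma>S)
  case (PV i ts) thus ?case by (auto simp: inst_props)
next
  case (PS i ts) thus ?case by (auto simp: inst_props)
next
  case (AllT A) thus ?case using AllT.IH[of "liftFOa 1 \<sigma>P" "liftFOa 1 \<sigma>S"] by (auto simp: liftFOa_props)
next
  case (AllP n A) thus ?case using AllP.IH[of "upPV n \<sigma>P" "\<lambda>m i. shP n (\<sigma>S m i)"] bt_upPV by (auto simp: shP_props)
next
  case (Mu A ts)
  have "bt A \<or> (\<exists>m i. bt (shS (length ts) (liftFOa (length ts) \<sigma>P m i)))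
     \<or> (\<exists>m i. bt (upPS (length ts) (liftFOa (length ts) \<sigma>S) m i))"
    using Mu by simp
  thus ?case using bt_upPS[of "length ts" "\<sigma>S"] by (auto simp: shS_props liftFOa_props)
qed auto

lemma substP_occ:
  "occS m i X \<Longrightarrow> occS k j (\<sigma>S m i) \<Longrightarrow> occS k j (substP \<sigma>P \<sigma>S X)"
proof (induction X arbitrary: \<sigma>P \<sigma>S m i k j)
  case (PS i' ts) thus ?case by (auto simp: inst_props)
next
  case (AllT A) thus ?case by (auto simp: liftFOa_props)
next
  case (AllP n A) thus ?case by (auto simp: shP_props)
next
  case (Mu A ts)
  let ?n = "length ts"
  let ?sP = "\<lambda>m i. shS ?n (liftFOa ?n \<sigma>P m i)"
  let ?sS = "upPS ?n (liftFOa ?n \<sigma>S)"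
  have a: "occS m (if m = ?n then Suc i else i) A" using Mu.prems by (auto split: if_splits)
  have b: "occS k (if k = ?n then Suc j else j) (?sS m (if m = ?n then Suc i else i))"
    unfolding upPS_sh shS_props liftFOa_props using Mu.prems by simp
  have "occS k (if k = ?n then Suc j else j) (substP ?sP ?sS A)"
    using Mu.IH[where \<sigma>P="?sP" and \<sigma>S="?sS", OF a b] .
  thus ?case by (simp add: eq_commute[of ?n])
qed auto

lemma nocc_upPV: "(\<forall>m i. \<not> occS k j (\<sigma> m i)) \<Longrightarrow> \<not> occS k j (upPV n \<sigma> m i)"
  by (auto simp: upPV_def idPV_def shP_props split: nat.splits)

lemma substP_pol:
  "(\<forall>m i. \<not> occS k j (\<sigma>P m i)) \<Longrightarrow>
   (\<forall>m i. (\<not> allpol b m i X \<longrightarrow> allpol False k j (\<sigma>S m i)) \<and>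
          (\<not> allpol (\<not> b) m i X \<longrightarrow> allpol True k j (\<sigma>S m i))) \<Longrightarrow>
   allpol b k j (substP \<sigma>P \<sigma>S X)"
proof (induction X arbitrary: b \<sigma>P \<sigma>S k j)
  case (PV i ts) thus ?case by (simp add: inst_props nocc_allpol)
next
  case (PS i ts)
  thus ?case by (cases b) (auto simp: inst_props)
next
  case (Arr A B)
  have 1: "allpol (\<not> b) k j (substP \<sigma>P \<sigma>S A)"
    by (rule Arr.IH(1)) (use Arr.prems in auto)
  have 2: "allpol b k j (substP \<sigma>P \<sigma>S B)"
    by (rule Arr.IH(2)) (use Arr.prems in auto)
  show ?case using 1 2 by simp
next
  case (AllT A)
  have "allpol b k j (substP (liftFOa 1 \<sigma>P) (liftFOa 1 \<sigma>S) A)"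
    by (rule AllT.IH) (use AllT.prems in \<open>auto simp: liftFOa_props\<close>)
  thus ?case by simp
next
  case (AllP n A)
  have "allpol b k j (substP (upPV n \<sigma>P) (\<lambda>m i. shP n (\<sigma>S m i)) A)"
    by (rule AllP.IH) (use AllP.prems nocc_upPV[of k j \<sigma>P n] in \<open>auto simp: shP_props\<close>)
  thus ?case by simp
next
  case (Mu A ts)
  let ?n = "length ts"
  let ?j = "if k = ?n then Suc j else j"
  let ?sP = "\<lambda>m i. shS ?n (liftFOa ?n \<sigma>P m i)"
  let ?sS = "upPS ?n (liftFOa ?n \<sigma>S)"
  have P: "\<forall>m i. \<not> occS k ?j (?sP m i)"
    using Mu.prems(1) by (simp add: shS_props liftFOa_props)
  have S: "\<forall>m i. (\<not> allpol b m i A \<longrightarrow> allpol False k ?j (?sS m i)) \<and>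
          (\<not> allpol (\<not> b) m i A \<longrightarrow> allpol True k ?j (?sS m i))"
  proof (intro allI)
    fix m i
    show "(\<not> allpol b m i A \<longrightarrow> allpol False k ?j (?sS m i)) \<and>
          (\<not> allpol (\<not> b) m i A \<longrightarrow> allpol True k ?j (?sS m i))"
    proof (cases "m = ?n \<and> i = 0")
      case True
      thus ?thesis by (auto simp: upPS_def idPS_def inst_def)
    next
      case False
      obtain i' where i': "i = (if m = ?n then Suc i' else i')"
      proof (cases "m = ?n")
        case True
        with False obtain i'' where "i = Suc i''" by (cases i) auto
        thus ?thesis using that True by auto
      next
        case False2: False
        thus ?thesis using that by auto
      qed
      have e: "?sS m i = shS ?n (liftFOa ?n \<sigma>S m i')"
        unfolding i' upPS_sh ..
      have "allpol c k ?j (?sS m i) = allpol c k j (\<sigma>S m i')" for c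
        unfolding e shS_props liftFOa_props ..
      moreover have "allpol c m i A = allpol c m i' (Mu A ts)" for c
        using i' by (auto simp: eq_commute[of ?n])
      ultimately show ?thesis using Mu.prems(2) by metis
    qed
  qed
  have "allpol b k ?j (substP ?sP ?sS A)"
    by (rule Mu.IH[OF P S])
  thus ?case by (simp add: eq_commute[of ?n])
qed auto

lemma upPS_other: "\<not> (m = n \<and> i = 0) \<Longrightarrow> \<exists>Y. upPS n \<tau> m i = shS n Y"
  by (auto simp: upPS_def split: nat.splits)

lemma substP_type:
  "is_type X \<Longrightarrow> (\<forall>m i. is_type (\<sigma>P m i)) \<Longrightarrow> (\<forall>m i. is_type (\<sigma>S m i)) \<Longrightarrow>
   is_type (substP \<sigma>P \<sigma>S X)"
proof (induction X arbitrary: \<sigma>P \<sigma>S)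
  case (PV i ts) thus ?case by (simp add: inst_props)
next
  case (PS i ts) thus ?case by (simp add: inst_props)
next
  case (AllT A) thus ?case by (simp add: liftFOa_props)
next
  case (AllP n A)
  have "\<forall>m i. is_type (upPV n \<sigma>P m i)"
    using AllP.prems by (auto simp: upPV_def idPV_def shP_props split: nat.splits)
  thus ?case using AllP by (simp add: shP_props)
next
  case (Mu A ts)
  let ?n = "length ts"
  let ?sP = "\<lambda>m i. shS ?n (liftFOa ?n \<sigma>P m i)"
  let ?sS = "upPS ?n (liftFOa ?n \<sigma>S)"
  have tP: "\<forall>m i. is_type (?sP m i)" using Mu.prems by (simp add: shS_props liftFOa_props)
  have tS: "\<forall>m i. is_type (?sS m i)"
    using Mu.prems by (auto simp: upPS_def idPS_def shS_props liftFOa_props split: nat.splits)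
  have A: "is_type A" "occS ?n 0 A" "allpol True ?n 0 A"
    using Mu.prems by (auto simp: positiveS_def)
  have s0: "?sS ?n 0 = PS 0 (map TV [0..<?n])" by (simp add: upPS_def idPS_def)
  have o: "occS ?n 0 (substP ?sP ?sS A)"
    by (rule substP_occ[OF A(2)]) (simp add: s0)
  have p: "allpol True ?n 0 (substP ?sP ?sS A)"
  proof (rule substP_pol)
    show "\<forall>m i. \<not> occS ?n 0 (?sP m i)" by (simp add: shS_props)
    show "\<forall>m i. (\<not> allpol True m i A \<longrightarrow> allpol False ?n 0 (?sS m i)) \<and>
          (\<not> allpol (\<not> True) m i A \<longrightarrow> allpol True ?n 0 (?sS m i))"
    proof (intro allI)
      fix m i
      show "(\<not> allpol True m i A \<longrightarrow> allpol False ?n 0 (?sS m i)) \<and>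
          (\<not> allpol (\<not> True) m i A \<longrightarrow> allpol True ?n 0 (?sS m i))"
      proof (cases "m = ?n \<and> i = 0")
        case True thus ?thesis using A(3) s0 by auto
      next
        case False
        then obtain Y where "?sS m i = shS ?n Y" using upPS_other by blast
        thus ?thesis by (simp add: shS_props)
      qed
    qed
  qed
  show ?case using Mu.IH[OF A(1) tP tS] o p by (simp add: positiveS_def)
qed auto

lemma unfoldMu_type: "is_type (Mu D ts) \<Longrightarrow> is_type (unfoldMu D ts)"
  unfolding unfoldMu_def substC_def
  by (rule substP_type)
     (auto simp: substF_props shF_def idPV_def idPS_def positiveS_def split: nat.splits)

lemma substX_type: "is_type X \<Longrightarrow> is_type G \<Longrightarrow> is_type (substX n G X)"
  unfolding substX_def
  by (rule substP_type) (auto simp: idPV_def idPS_def split: nat.splits)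

lemma unfoldMu_bt: "bt (unfoldMu D ts) \<Longrightarrow> bt D"
  unfolding unfoldMu_def substC_def
  by (drule substP_bt2) (auto simp: substF_props shF_def idPV_def idPS_def split: if_splits nat.splits)

lemma subty_type: "subty E A B \<Longrightarrow> is_type A \<and> is_type B"
proof (induction rule: subty.induct)
  case (allT_R A B) thus ?case by (simp add: shF_def substF_props)
next
  case (allP_R n A B) thus ?case by (simp add: shP_props)
next
  case (eqn v w B A y) thus ?case by (simp add: substF_props)
next
  case (mu_fold D ts) thus ?case using unfoldMu_type by blast
next
  case (mu_unfold D ts) thus ?case using unfoldMu_type by blast
next
  case (mu_ind D ts F) thus ?case by (simp add: substF_props)
qed auto

lemma subty_bt: "subty E A B \<Longrightarrow> bt A \<Longrightarrow> bt B"
proof (induction rule: subty.induct)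
  case (allT_L A t B) thus ?case by (simp add: substF_props)
next
  case (allP_L n A G B) thus ?case by (simp add: substX_def substP_bt1)
next
  case (allT_R A B) thus ?case by (simp add: shF_def substF_props)
next
  case (allP_R n A B) thus ?case by (simp add: shP_props)
next
  case (eqn v w B A y) thus ?case by (simp add: substF_props)
next
  case (mu_fold D ts) thus ?case using unfoldMu_bt by simp
next
  case (mu_unfold D ts) thus ?case
    by (simp add: unfoldMu_def substC_def substP_bt1 substF_props)
next
  case (mu_ind D ts F) thus ?case
    by (simp add: substC_def substP_bt1 substF_props)
qed auto

lemma botty_bt: "botty A \<Longrightarrow> bt A"
  by (induction rule: botty.induct) auto

lemma bt_botty: "is_type B \<Longrightarrow> bt B \<Longrightarrow> botty B"
  by (induction B) (auto intro: botty.intros simp: positiveS_def)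

theorem lemma6p1:
  fixes E :: "('f trm \<times> 'f trm) set" and A B :: "'f ty"
  assumes "botty A" and "subty E A B"
  shows "botty B"
  using assms subty_type subty_bt botty_bt bt_botty by metis

end
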